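(* Let $H$ be a real Hilbert space, $T_n:H\to H$ for every $n\in\mathbb{N}$, and $(\gamma_n)$ a sequence of positive reals with $\sum_{n=0}^\infty\gamma_n^2=\infty$. Assume that $(T_n)$ is jointly firmly nonexpansive with respect to $(\gamma_n)$ and that $F:=\bigcap_{n\in\mathbb{N}}Fix(T_n)\neq\emptyset$. Let $x\in H$, $x_0:=x$, $x_{n+1}:=T_nx_n$ for all $n$. Then $(x_n)$ converges weakly to a point of $F$.
   Context: $(T_n)$ is jointly firmly nonexpansive w.r.t. $(\gamma_n)$ if for all $n,m\in\mathbb{N}$, $x,y\in H$, $\alpha,\beta\in[0,1]$ with $(1-\alpha)\gamma_n=(1-\beta)\gamma_m$: $\|T_nx-T_my\|\le\|((1-\alpha)x+\alpha T_nx)-((1-\beta)y+\beta T_my)\|$. $Fix(T)$ is the fixed point set of $T$. *)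

theory Defs
  imports "HOL-Analysis.Analysis"
begin

definition Fix :: "('a \<Rightarrow> 'a) \<Rightarrow> 'a set" where
  "Fix T = {x. T x = x}"

definition jointly_firmly_nonexpansive ::
  "(nat \<Rightarrow> 'a::real_normed_vector \<Rightarrow> 'a) \<Rightarrow> (nat \<Rightarrow> real) \<Rightarrow> bool" where
  "jointly_firmly_nonexpansive T \<gamma> \<longleftrightarrow>
     (\<forall>n m x y \<alpha> \<beta>. \<alpha> \<in> {0..1} \<longrightarrow> \<beta> \<in> {0..1} \<longrightarrow>
        (1 - \<alpha>) * \<gamma> n = (1 - \<beta>) * \<gamma> m \<longrightarrow>
        norm (T n x - T m y) \<le>
          norm (((1 - \<alpha>) *\<^sub>R x + \<alpha> *\<^sub>R T n x) - ((1 - \<beta>) *\<^sub>R y + \<beta> *\<^sub>R T m y)))"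

definition weakly_convergent_to :: "(nat \<Rightarrow> 'a::real_inner) \<Rightarrow> 'a \<Rightarrow> bool" where
  "weakly_convergent_to x p \<longleftrightarrow> (\<forall>y. (\<lambda>n. inner (x n) y) \<longlonglongrightarrow> inner p y)"

end

theory Submission
  imports Defs "HOL-Library.Diagonal_Subsequence"
begin

lemma key_ineq:
  fixes b c :: "'a::real_inner"
  assumes d: "\<delta> > 0" and h: "\<And>s. 0 < s \<Longrightarrow> s \<le> \<delta> \<Longrightarrow> norm b \<le> norm (b + s *\<^sub>R c)"
  shows "inner b c \<ge> 0"
proof (rule ccontr)
  assume "\<not> inner b c \<ge> 0"
  hence neg: "inner b c < 0" by simp
  define s where "s = min \<delta> (- inner b c / (inner c c + 1))"
  have cc: "inner c c \<ge> 0" by simp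
  have cc1: "inner c c + 1 > 0" using cc by linarith
  have "- inner b c / (inner c c + 1) > 0" using neg cc1 by (intro divide_pos_pos) auto
  hence s0: "s > 0" using d unfolding s_def by simp
  have sd: "s \<le> \<delta>" unfolding s_def by simp
  have "s * inner c c < - inner b c"
  proof -
    have "s \<le> - inner b c / (inner c c + 1)" unfolding s_def by simp
    hence "s * (inner c c + 1) \<le> - inner b c" using cc by (simp add: field_simps)
    thus ?thesis using s0 by (simp add: algebra_simps)
  qed
  hence lt: "2 * s * inner b c + s * s * inner c c < 0"
  proof -
    have "s * (s * inner c c) < s * (- inner b c)" using s0 \<open>s * inner c c < - inner b c\<close>
      by (intro mult_strict_left_mono) auto
    moreover have "s * inner b c < 0" using s0 neg by (simp add: mult_pos_neg)
    ultimately show ?thesis by (simp add: algebra_simps)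
  qed
  have "norm b ^ 2 \<le> norm (b + s *\<^sub>R c) ^ 2" using h[OF s0 sd] by (simp add: power_mono)
  also have "norm (b + s *\<^sub>R c) ^ 2 = norm b ^ 2 + 2 * s * inner b c + s * s * inner c c"
    by (simp add: power2_norm_eq_inner inner_add_left inner_add_right inner_commute algebra_simps)
  finally show False using lt by simp
qed

lemma proj_exists:
  fixes C :: "'a::{real_inner,complete_space} set"
  assumes cl: "closed C" and cv: "convex C" and ne: "C \<noteq> {}"
  shows "\<exists>p\<in>C. \<forall>c\<in>C. inner (y - p) (c - p) \<le> 0"
proof -
  define D where "D = (\<lambda>c. norm (y - c) ^ 2) ` C"
  define d where "d = Inf D"
  have Dne: "D \<noteq> {}" using ne unfolding D_def by auto
  have Dbd: "bdd_below D" unfolding D_def by (rule bdd_belowI[of _ 0]) auto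
  have dle: "d \<le> norm (y - c) ^ 2" if "c \<in> C" for c
    unfolding d_def D_def using that Dbd[unfolded D_def] by (auto intro: cInf_lower)
  have "\<forall>n. \<exists>c\<in>C. norm (y - c) ^ 2 < d + 1 / Suc n"
  proof
    fix n
    have "Inf D < d + 1 / Suc n" unfolding d_def by simp
    from cInf_lessD[OF Dne this] show "\<exists>c\<in>C. norm (y - c) ^ 2 < d + 1 / Suc n"
      unfolding D_def by auto
  qed
  then obtain cs where csC: "\<And>n. cs n \<in> C" and csd: "\<And>n. norm (y - cs n) ^ 2 < d + 1 / Suc n"
    by metis
  have pd: "norm (cs n - cs m) ^ 2 \<le> 2 / Suc n + 2 / Suc m" for n m
  proof -
    have mid: "(1/2) *\<^sub>R cs n + (1/2) *\<^sub>R cs m \<in> C"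
      using cv csC unfolding convex_def by (metis add_divide_distrib divide_self_if zero_le_divide_1_iff zero_le_numeral one_add_one zero_neq_numeral)
    have "d \<le> norm (y - ((1/2) *\<^sub>R cs n + (1/2) *\<^sub>R cs m)) ^ 2" using dle[OF mid] .
    also have "norm (y - ((1/2) *\<^sub>R cs n + (1/2) *\<^sub>R cs m)) ^ 2
       = (1/4) * norm ((y - cs n) + (y - cs m)) ^ 2"
    proof -
      have yy: "y = (1/2) *\<^sub>R y + (1/2) *\<^sub>R y" by (simp add: scaleR_add_left[symmetric])
      have "y - ((1/2) *\<^sub>R cs n + (1/2) *\<^sub>R cs m) = (1/2) *\<^sub>R ((y - cs n) + (y - cs m))"
        by (subst yy) (simp add: algebra_simps)
      thus ?thesis by (simp add: power2_eq_square)
    qed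
    finally have m1: "4 * d \<le> norm ((y - cs n) + (y - cs m)) ^ 2" by simp
    have par: "norm (cs n - cs m) ^ 2 + norm ((y - cs n) + (y - cs m)) ^ 2
        = 2 * norm (y - cs n) ^ 2 + 2 * norm (y - cs m) ^ 2"
      by (simp add: power2_norm_eq_inner inner_add_left inner_add_right inner_diff_left inner_diff_right inner_commute algebra_simps)
    show ?thesis using par m1 csd[of n] csd[of m] by simp
  qed
  have "Cauchy cs"
  proof (rule metric_CauchyI)
    fix e :: real assume e: "e > 0"
    obtain M :: nat where M: "4 / (e^2) < M" using reals_Archimedean2 by blast
    have e2: "e^2 > 0" using e by simp
    have Mb: "4 / Suc M < e^2"
    proof -
      have "4 < M * e^2" using M e2 by (simp add: field_simps)
      also have "\<dots> < Suc M * e^2" using e2 by simp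
      finally show ?thesis by (simp add: field_simps)
    qed
    show "\<exists>M. \<forall>m\<ge>M. \<forall>n\<ge>M. dist (cs m) (cs n) < e"
    proof (intro exI allI impI)
      fix m n assume mM: "m \<ge> M" and nM: "n \<ge> M"
      have a: "2 / real (Suc m) \<le> 2 / Suc M" using mM by (simp add: frac_le)
      have b: "2 / real (Suc n) \<le> 2 / Suc M" using nM by (simp add: frac_le)
      have "dist (cs m) (cs n) ^ 2 < e ^ 2" unfolding dist_norm
        using pd[of m n] a b Mb by simp
      thus "dist (cs m) (cs n) < e" using e by (simp add: power_less_imp_less_base)
    qed
  qed
  then obtain p where lim: "cs \<longlonglongrightarrow> p" using Cauchy_convergent_iff convergent_def by blast
  have pC: "p \<in> C" using cl lim csC closed_sequential_limits by blast
  have pmin: "norm (y - p) ^ 2 \<le> norm (y - c) ^ 2" if cC: "c \<in> C" for c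
  proof -
    have l1: "(\<lambda>n. norm (y - cs n) ^ 2) \<longlonglongrightarrow> norm (y - p) ^ 2"
      by (intro tendsto_intros lim)
    have l2: "(\<lambda>n. norm (y - c) ^ 2 + 1 / Suc n) \<longlonglongrightarrow> norm (y - c) ^ 2 + 0"
      by (intro tendsto_intros LIMSEQ_inverse_real_of_nat[unfolded inverse_eq_divide])
    hence l2': "(\<lambda>n. norm (y - c) ^ 2 + 1 / Suc n) \<longlonglongrightarrow> norm (y - c) ^ 2" by simp
    show ?thesis
    proof (rule LIMSEQ_le[OF l1 l2'])
      show "\<exists>N. \<forall>n\<ge>N. norm (y - cs n) ^ 2 \<le> norm (y - c) ^ 2 + 1 / Suc n"
        using csd dle[OF cC] by (metis less_eq_real_def add_le_cancel_right order_trans)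
    qed
  qed
  show ?thesis
  proof (intro bexI[OF _ pC] ballI)
    fix c assume cC: "c \<in> C"
    have "inner (y - p) (p - c) \<ge> 0"
    proof (rule key_ineq[of 1])
      fix s :: real assume s: "0 < s" "s \<le> 1"
      have "(1 - s) *\<^sub>R p + s *\<^sub>R c \<in> C" using cv pC cC s unfolding convex_def by auto
      hence "norm (y - p) ^ 2 \<le> norm (y - ((1 - s) *\<^sub>R p + s *\<^sub>R c)) ^ 2" by (rule pmin)
      also have "y - ((1 - s) *\<^sub>R p + s *\<^sub>R c) = (y - p) + s *\<^sub>R (p - c)"
        by (simp add: algebra_simps)
      finally show "norm (y - p) \<le> norm ((y - p) + s *\<^sub>R (p - c))"
        using power2_le_imp_le by (metis norm_ge_zero)
    qed simp
    thus "inner (y - p) (c - p) \<le> 0"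
      by (metis inner_minus_right minus_diff_eq neg_0_le_iff_le)
  qed
qed


lemma riesz:
  fixes f :: "'a::{real_inner,complete_space} \<Rightarrow> real"
  assumes add: "\<And>a b. f (a + b) = f a + f b" and sc: "\<And>r a. f (r *\<^sub>R a) = r * f a"
    and bd: "\<And>a. \<bar>f a\<bar> \<le> K * norm a"
  shows "\<exists>p. \<forall>y. f y = inner p y"
proof (cases "\<forall>y. f y = 0")
  case True thus ?thesis by (intro exI[of _ 0]) simp
next
  case False
  then obtain y0 where y0: "f y0 \<noteq> 0" by blast
  have f0: "f 0 = 0" using sc[of 0 0] by simp
  have fm: "f (a - b) = f a - f b" for a b
    using add[of a "(-1) *\<^sub>R b"] sc[of "-1" b] by simp
  define N where "N = {y. f y = 0}"
  have clN: "closed N" unfolding N_def closed_sequential_limits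
  proof (intro allI impI, elim conjE)
    fix s l assume s: "\<forall>n. s n \<in> {y. f y = 0}" and sl: "s \<longlonglongrightarrow> l"
    have "\<bar>f l\<bar> \<le> K * norm (l - s n)" for n using bd[of "l - s n"] fm[of l "s n"] s by simp
    moreover have "(\<lambda>n. K * norm (l - s n)) \<longlonglongrightarrow> K * norm (l - l)"
      by (intro tendsto_intros sl)
    ultimately have "\<bar>f l\<bar> \<le> 0"
      by (intro LIMSEQ_le[of "\<lambda>n. \<bar>f l\<bar>" "\<bar>f l\<bar>" "\<lambda>n. K * norm (l - s n)" 0]) auto
    thus "l \<in> {y. f y = 0}" by simp
  qed
  have cvN: "convex N" unfolding N_def convex_def using add sc by simp
  have neN: "N \<noteq> {}" using f0 unfolding N_def by auto
  obtain q where qN: "q \<in> N" and q: "\<forall>c\<in>N. inner (y0 - q) (c - q) \<le> 0"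
    using proj_exists[OF clN cvN neN] by blast
  define z where "z = y0 - q"
  have orth: "inner z n = 0" if nN: "n \<in> N" for n
  proof -
    have "q + n \<in> N" "q - n \<in> N" using qN nN add fm unfolding N_def by auto
    hence "inner z n \<le> 0" "inner z (- n) \<le> 0" using q unfolding z_def by (metis add_diff_cancel_left', metis diff_diff_cancel diff_minus_eq_add minus_diff_eq add_diff_cancel_left' diff_add_cancel)
    thus ?thesis by simp
  qed
  have fz: "f z \<noteq> 0" using y0 qN fm unfolding z_def N_def by simp
  have zz: "inner z z \<noteq> 0" using fz f0 by auto
  show ?thesis
  proof (intro exI[of _ "(f z / inner z z) *\<^sub>R z"] allI)
    fix y
    have "y - (f y / f z) *\<^sub>R z \<in> N" unfolding N_def using fm sc fz by simp
    hence "inner z (y - (f y / f z) *\<^sub>R z) = 0" by (rule orth)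
    hence "inner z y = (f y / f z) * inner z z" by (simp add: inner_diff_right)
    thus "f y = inner ((f z / inner z z) *\<^sub>R z) y" using fz zz by simp
  qed
qed


lemma diag_inner:
  fixes x :: "nat \<Rightarrow> 'a::real_inner"
  assumes B: "\<And>n. norm (x n) \<le> B"
  shows "\<exists>\<phi>. strict_mono \<phi> \<and> (\<forall>m. convergent (\<lambda>k. inner (x (\<phi> k)) (x m)))"
proof -
  interpret S: subseqs "\<lambda>m s. convergent (\<lambda>k. inner (x (s k)) (x m))"
  proof
    fix m and s :: "nat \<Rightarrow> nat" assume "strict_mono s"
    have "bounded (range (\<lambda>k. inner (x (s k)) (x m)))"
    proof (rule boundedI)
      fix r assume "r \<in> range (\<lambda>k. inner (x (s k)) (x m))"
      then obtain k where r: "r = inner (x (s k)) (x m)" by blast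
      have "norm r \<le> norm (x (s k)) * norm (x m)" unfolding r by (simp add: Cauchy_Schwarz_ineq2)
      also have "\<dots> \<le> B * norm (x m)" using B by (simp add: mult_right_mono)
      finally show "norm r \<le> B * norm (x m)" .
    qed
    from bounded_imp_convergent_subsequence[OF this] obtain l r where
      "strict_mono r" "((\<lambda>k. inner (x (s k)) (x m)) \<circ> r) \<longlonglongrightarrow> l" by blast
    thus "\<exists>r'. strict_mono r' \<and> convergent (\<lambda>k. inner (x ((s \<circ> r') k)) (x m))"
      by (intro exI[of _ r]) (auto simp: convergent_def o_def)
  qed
  have "convergent (\<lambda>k. inner (x ((S.diagseq \<circ> (+) (Suc m)) k)) (x m))" for m
  proof (rule S.diagseq_holds)
    fix r s n assume r: "strict_mono (r::nat\<Rightarrow>nat)" and c: "convergent (\<lambda>k. inner (x (s k)) (x n))"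
    from convergent_subseq_convergent[OF c r]
    show "convergent (\<lambda>k. inner (x ((s \<circ> r) k)) (x n))" by (simp add: o_def)
  qed
  hence "convergent (\<lambda>k. inner (x (S.diagseq k)) (x m))" for m
  proof -
    from \<open>convergent (\<lambda>k. inner (x ((S.diagseq \<circ> (+) (Suc m)) k)) (x m))\<close>
    obtain L where "(\<lambda>k. inner (x (S.diagseq (Suc m + k))) (x m)) \<longlonglongrightarrow> L"
      unfolding convergent_def o_def by blast
    hence "(\<lambda>k. inner (x (S.diagseq (k + Suc m))) (x m)) \<longlonglongrightarrow> L" by (simp add: add.commute)
    hence "(\<lambda>k. inner (x (S.diagseq k)) (x m)) \<longlonglongrightarrow> L" by (rule LIMSEQ_offset)
    thus ?thesis unfolding convergent_def by blast
  qed
  thus ?thesis using S.subseq_diagseq by blast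
qed

lemma weak_compact:
  fixes x :: "nat \<Rightarrow> 'a::{real_inner,complete_space}"
  assumes B: "\<And>n. norm (x n) \<le> B"
  shows "\<exists>\<phi> p. strict_mono \<phi> \<and> (\<forall>y. (\<lambda>k. inner (x (\<phi> k)) y) \<longlonglongrightarrow> inner p y)"
proof -
  obtain \<phi> where \<phi>: "strict_mono \<phi>" and cm: "\<forall>m. convergent (\<lambda>k. inner (x (\<phi> k)) (x m))"
    using diag_inner[of x B] B by blast
  have cs: "convergent (\<lambda>k. inner (x (\<phi> k)) s)" if "s \<in> span (range x)" for s
    using that
  proof (induct rule: span_induct_alt)
    case base
    show ?case by (simp add: convergent_const)
  next
    case (step c z y)
    then obtain m where zm: "z = x m" by blast
    obtain L1 where L1: "(\<lambda>k. inner (x (\<phi> k)) (x m)) \<longlonglongrightarrow> L1" using cm convergent_def by blast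
    obtain L2 where L2: "(\<lambda>k. inner (x (\<phi> k)) y) \<longlonglongrightarrow> L2" using step(2) convergent_def by blast
    have "(\<lambda>k. c * inner (x (\<phi> k)) (x m) + inner (x (\<phi> k)) y) \<longlonglongrightarrow> c * L1 + L2"
      by (intro tendsto_intros L1 L2)
    thus ?case unfolding zm convergent_def by (auto simp: inner_add_right)
  qed
  define V where "V = closure (span (range x))"
  have B0: "\<bar>B\<bar> + 1 > 0" by simp
  have Bn: "norm (x n) \<le> \<bar>B\<bar> + 1" for n using B[of n] by simp
  have cV: "convergent (\<lambda>k. inner (x (\<phi> k)) v)" if vV: "v \<in> V" for v
  proof -
    have "Cauchy (\<lambda>k. inner (x (\<phi> k)) v)"
    proof (rule metric_CauchyI)
      fix e :: real assume e: "e > 0"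
      define B1 where "B1 = \<bar>B\<bar> + 1"
      have B1: "B1 > 0" unfolding B1_def by simp
      obtain s where sS: "s \<in> span (range x)" and sv: "dist s v < e / (4 * B1)"
        using vV unfolding V_def closure_approachable using e B1 by (metis divide_pos_pos mult_pos_pos zero_less_numeral)
      have "Cauchy (\<lambda>k. inner (x (\<phi> k)) s)" using cs[OF sS] Cauchy_convergent_iff by blast
      then obtain M where M: "\<forall>m\<ge>M. \<forall>n\<ge>M. dist (inner (x (\<phi> m)) s) (inner (x (\<phi> n)) s) < e/2"
        using e metric_CauchyD[of _ "e/2"] by (meson half_gt_zero)
      show "\<exists>M. \<forall>m\<ge>M. \<forall>n\<ge>M. dist (inner (x (\<phi> m)) v) (inner (x (\<phi> n)) v) < e"
      proof (intro exI allI impI)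
        fix m n assume mM: "m \<ge> M" and nM: "n \<ge> M"
        have eq: "inner (x (\<phi> m)) v - inner (x (\<phi> n)) v
           = inner (x (\<phi> m) - x (\<phi> n)) (v - s) + (inner (x (\<phi> m)) s - inner (x (\<phi> n)) s)"
          by (simp add: inner_diff_left inner_diff_right)
        have "\<bar>inner (x (\<phi> m) - x (\<phi> n)) (v - s)\<bar> \<le> norm (x (\<phi> m) - x (\<phi> n)) * norm (v - s)"
          by (rule Cauchy_Schwarz_ineq2)
        also have "\<dots> \<le> (2 * B1) * (e / (4 * B1))"
        proof (rule mult_mono)
          have "norm (x (\<phi> m) - x (\<phi> n)) \<le> norm (x (\<phi> m)) + norm (x (\<phi> n))" by (rule norm_triangle_ineq4)
          thus "norm (x (\<phi> m) - x (\<phi> n)) \<le> 2 * B1" using Bn[of "\<phi> m"] Bn[of "\<phi> n"] unfolding B1_def by simp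
          show "norm (v - s) \<le> e / (4 * B1)" using sv by (simp add: dist_norm norm_minus_commute)
        qed (use B1 in auto)
        also have "\<dots> = e / 2" using B1 by (simp add: field_simps)
        finally have a: "\<bar>inner (x (\<phi> m) - x (\<phi> n)) (v - s)\<bar> \<le> e / 2" .
        have b: "\<bar>inner (x (\<phi> m)) s - inner (x (\<phi> n)) s\<bar> < e / 2" using M mM nM by (simp add: dist_real_def)
        show "dist (inner (x (\<phi> m)) v) (inner (x (\<phi> n)) v) < e"
          unfolding dist_real_def eq using a b by linarith
      qed
    qed
    thus ?thesis using Cauchy_convergent_iff by blast
  qed
  have shift: "v + s \<in> V" if vV: "v \<in> V" and sS: "s \<in> span (range x)" for v s
    unfolding V_def closure_approachable
  proof (intro allI impI)
    fix e :: real assume e: "e > 0"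
    obtain t where tS: "t \<in> span (range x)" and tv: "dist t v < e"
      using vV e unfolding V_def closure_approachable by blast
    show "\<exists>y\<in>span (range x). dist y (v + s) < e"
      using tS sS tv by (intro bexI[of _ "t + s"]) (auto simp: span_add dist_norm)
  qed
  have clV: "closed V" unfolding V_def by simp
  have cvV: "convex V" unfolding V_def by (intro convex_closure subspace_imp_convex subspace_span)
  have neV: "V \<noteq> {}" unfolding V_def using span_zero closure_subset by blast
  have cy: "convergent (\<lambda>k. inner (x (\<phi> k)) y)" for y
  proof -
    obtain P where PV: "P \<in> V" and Pc: "\<forall>c\<in>V. inner (y - P) (c - P) \<le> 0"
      using proj_exists[OF clV cvV neV] by blast
    have orth: "inner (y - P) (x m) = 0" for m
    proof -
      have xm: "x m \<in> span (range x)" by (simp add: span_base)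
      have "P + x m \<in> V" using shift[OF PV] xm by blast
      moreover have "P + (- x m) \<in> V" using shift[OF PV] xm span_neg by blast
      ultimately have "inner (y - P) (x m) \<le> 0" "inner (y - P) (- x m) \<le> 0" using Pc by force+
      thus ?thesis by simp
    qed
    have "inner (x (\<phi> k)) y = inner (x (\<phi> k)) P" for k
    proof -
      have "inner (x (\<phi> k)) (y - P) = 0" using orth[of "\<phi> k"] by (simp add: inner_commute)
      thus ?thesis by (simp add: inner_diff_right)
    qed
    thus ?thesis using cV[OF PV] by simp
  qed
  define f where "f y = lim (\<lambda>k. inner (x (\<phi> k)) y)" for y
  have ft: "(\<lambda>k. inner (x (\<phi> k)) y) \<longlonglongrightarrow> f y" for y
    unfolding f_def using cy convergent_LIMSEQ_iff by blast
  have fadd: "f (a + b) = f a + f b" for a b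
  proof -
    have "(\<lambda>k. inner (x (\<phi> k)) a + inner (x (\<phi> k)) b) \<longlonglongrightarrow> f a + f b" by (intro tendsto_intros ft)
    hence "(\<lambda>k. inner (x (\<phi> k)) (a + b)) \<longlonglongrightarrow> f a + f b" by (simp add: inner_add_right)
    thus ?thesis using ft LIMSEQ_unique by blast
  qed
  have fsc: "f (r *\<^sub>R a) = r * f a" for r a
  proof -
    have "(\<lambda>k. r * inner (x (\<phi> k)) a) \<longlonglongrightarrow> r * f a" by (intro tendsto_intros ft)
    hence "(\<lambda>k. inner (x (\<phi> k)) (r *\<^sub>R a)) \<longlonglongrightarrow> r * f a" by simp
    thus ?thesis using ft LIMSEQ_unique by blast
  qed
  have fbd: "\<bar>f a\<bar> \<le> B * norm a" for a
  proof (rule LIMSEQ_le_const2)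
    show "(\<lambda>k. \<bar>inner (x (\<phi> k)) a\<bar>) \<longlonglongrightarrow> \<bar>f a\<bar>" by (intro tendsto_intros ft)
    have "\<bar>inner (x (\<phi> k)) a\<bar> \<le> B * norm a" for k
    proof -
      have "\<bar>inner (x (\<phi> k)) a\<bar> \<le> norm (x (\<phi> k)) * norm a" by (rule Cauchy_Schwarz_ineq2)
      also have "\<dots> \<le> B * norm a" using B by (simp add: mult_right_mono)
      finally show ?thesis .
    qed
    thus "\<exists>N. \<forall>n\<ge>N. \<bar>inner (x (\<phi> n)) a\<bar> \<le> B * norm a" by blast
  qed
  obtain p where p: "\<forall>y. f y = inner p y" using riesz[OF fadd fsc fbd] by blast
  show ?thesis using \<phi> ft p by metis
qed


lemma opial:
  fixes xs :: "nat \<Rightarrow> 'a::{real_inner,complete_space}" and F :: "'a set"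
  assumes bnd: "\<And>n. norm (xs n) \<le> B"
    and fej: "\<And>q n. q \<in> F \<Longrightarrow> norm (xs (Suc n) - q) \<le> norm (xs n - q)"
    and clus: "\<And>\<phi> z. strict_mono \<phi> \<Longrightarrow> (\<forall>y. (\<lambda>k. inner (xs (\<phi> k)) y) \<longlonglongrightarrow> inner z y) \<Longrightarrow> z \<in> F"
  shows "\<exists>p\<in>F. \<forall>y. (\<lambda>n. inner (xs n) y) \<longlonglongrightarrow> inner p y"
proof -
  have conv: "\<exists>L. (\<lambda>n. norm (xs n - q)) \<longlonglongrightarrow> L" if qF: "q \<in> F" for q
  proof -
    have "decseq (\<lambda>n. norm (xs n - q))" using fej[OF qF] by (simp add: decseq_Suc_iff)
    from decseq_convergent[OF this, of 0] show ?thesis by auto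
  qed
  have cinner: "\<exists>L. (\<lambda>n. inner (xs n) (p - q)) \<longlonglongrightarrow> L" if pF: "p \<in> F" and qF: "q \<in> F" for p q
  proof -
    obtain A where A: "(\<lambda>n. norm (xs n - p)) \<longlonglongrightarrow> A" using conv[OF pF] by blast
    obtain C where C: "(\<lambda>n. norm (xs n - q)) \<longlonglongrightarrow> C" using conv[OF qF] by blast
    have eq: "inner (xs n) (p - q) = (norm p ^ 2 - norm q ^ 2 - (norm (xs n - p) ^ 2 - norm (xs n - q) ^ 2)) / 2" for n
      by (simp add: power2_norm_eq_inner inner_diff_left inner_diff_right inner_commute algebra_simps)
    have "(\<lambda>n. (norm p ^ 2 - norm q ^ 2 - (norm (xs n - p) ^ 2 - norm (xs n - q) ^ 2)) / 2)
        \<longlonglongrightarrow> (norm p ^ 2 - norm q ^ 2 - (A ^ 2 - C ^ 2)) / 2"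
      by (intro tendsto_intros A C) simp
    thus ?thesis unfolding eq by blast
  qed
  have uniq: "p = q" if pF: "p \<in> F" and qF: "q \<in> F" and \<phi>: "strict_mono \<phi>" and \<psi>: "strict_mono \<psi>"
    and wp: "\<forall>y. (\<lambda>k. inner (xs (\<phi> k)) y) \<longlonglongrightarrow> inner p y"
    and wq: "\<forall>y. (\<lambda>k. inner (xs (\<psi> k)) y) \<longlonglongrightarrow> inner q y" for p q \<phi> \<psi>
  proof -
    obtain L where L: "(\<lambda>n. inner (xs n) (p - q)) \<longlonglongrightarrow> L" using cinner[OF pF qF] by blast
    have "(\<lambda>k. inner (xs (\<phi> k)) (p - q)) \<longlonglongrightarrow> L" using LIMSEQ_subseq_LIMSEQ[OF L \<phi>] by (simp add: o_def)
    hence 1: "L = inner p (p - q)" using wp LIMSEQ_unique by blast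
    have "(\<lambda>k. inner (xs (\<psi> k)) (p - q)) \<longlonglongrightarrow> L" using LIMSEQ_subseq_LIMSEQ[OF L \<psi>] by (simp add: o_def)
    hence 2: "L = inner q (p - q)" using wq LIMSEQ_unique by blast
    have "inner (p - q) (p - q) = 0" using 1 2 by (simp add: inner_diff_left)
    thus ?thesis by simp
  qed
  obtain \<phi> p where \<phi>: "strict_mono \<phi>" and wp: "\<forall>y. (\<lambda>k. inner (xs (\<phi> k)) y) \<longlonglongrightarrow> inner p y"
    using weak_compact[of xs B] bnd by blast
  have pF: "p \<in> F" using clus[OF \<phi> wp] .
  show ?thesis
  proof (intro bexI[OF _ pF] allI)
    fix y
    show "(\<lambda>n. inner (xs n) y) \<longlonglongrightarrow> inner p y"
    proof (rule ccontr)
      assume nt: "\<not> ?thesis"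
      then obtain e where e: "e > 0" and fr: "\<forall>N. \<exists>n\<ge>N. \<not> dist (inner (xs n) y) (inner p y) < e"
        unfolding lim_sequentially by blast
      define S where "S = {n. e \<le> \<bar>inner (xs n) y - inner p y\<bar>}"
      have "infinite S" unfolding infinite_nat_iff_unbounded_le S_def
      proof (intro allI)
        fix m
        obtain n where "n \<ge> m" "\<not> dist (inner (xs n) y) (inner p y) < e" using fr by blast
        thus "\<exists>n\<ge>m. n \<in> {n. e \<le> \<bar>inner (xs n) y - inner p y\<bar>}" by (auto simp: dist_real_def)
      qed
      then obtain \<psi> :: "nat \<Rightarrow> nat" where \<psi>: "strict_mono \<psi>" and \<psi>S: "\<And>n. \<psi> n \<in> S"
        using infinite_enumerate by blast
      obtain \<rho> q where \<rho>: "strict_mono \<rho>" and wq: "\<forall>z. (\<lambda>k. inner (xs (\<psi> (\<rho> k))) z) \<longlonglongrightarrow> inner q z"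
        using weak_compact[of "\<lambda>n. xs (\<psi> n)" B] bnd by blast
      have \<psi>\<rho>: "strict_mono (\<lambda>k. \<psi> (\<rho> k))" using \<psi> \<rho> by (rule strict_mono_compose)
      have qF: "q \<in> F" using clus[OF \<psi>\<rho> wq] .
      have "p = q" using uniq[OF pF qF \<phi> \<psi>\<rho> wp wq] .
      hence lim: "(\<lambda>k. inner (xs (\<psi> (\<rho> k))) y) \<longlonglongrightarrow> inner p y" using wq by simp
      then obtain N where "\<forall>k\<ge>N. dist (inner (xs (\<psi> (\<rho> k))) y) (inner p y) < e"
        using e unfolding lim_sequentially by blast
      hence "\<bar>inner (xs (\<psi> (\<rho> N))) y - inner p y\<bar> < e" by (simp add: dist_real_def)
      moreover have "\<psi> (\<rho> N) \<in> S" by (rule \<psi>S)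
      ultimately show False unfolding S_def by simp
    qed
  qed
qed


lemma JI:
  fixes T :: "nat \<Rightarrow> 'a::real_inner \<Rightarrow> 'a"
  assumes g: "\<And>n. \<gamma> n > 0" and J: "jointly_firmly_nonexpansive T \<gamma>"
  shows "inner (T n a - T m b) ((1 / \<gamma> n) *\<^sub>R (a - T n a) - (1 / \<gamma> m) *\<^sub>R (b - T m b)) \<ge> 0"
proof (rule key_ineq[of "min (\<gamma> n) (\<gamma> m)"])
  show "0 < min (\<gamma> n) (\<gamma> m)" using g by simp
  fix s :: real assume s: "0 < s" "s \<le> min (\<gamma> n) (\<gamma> m)"
  have gn: "\<gamma> n > 0" and gm: "\<gamma> m > 0" using g by auto
  define \<alpha> where "\<alpha> = 1 - s / \<gamma> n"
  define \<beta> where "\<beta> = 1 - s / \<gamma> m"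
  have a01: "\<alpha> \<in> {0..1}" using s gn unfolding \<alpha>_def by (auto simp: field_simps)
  have b01: "\<beta> \<in> {0..1}" using s gm unfolding \<beta>_def by (auto simp: field_simps)
  have ab: "(1 - \<alpha>) * \<gamma> n = (1 - \<beta>) * \<gamma> m" unfolding \<alpha>_def \<beta>_def using gn gm by simp
  have "norm (T n a - T m b) \<le>
          norm (((1 - \<alpha>) *\<^sub>R a + \<alpha> *\<^sub>R T n a) - ((1 - \<beta>) *\<^sub>R b + \<beta> *\<^sub>R T m b))"
    using J a01 b01 ab unfolding jointly_firmly_nonexpansive_def by blast
  also have "((1 - \<alpha>) *\<^sub>R a + \<alpha> *\<^sub>R T n a) - ((1 - \<beta>) *\<^sub>R b + \<beta> *\<^sub>R T m b)
     = (T n a - T m b) + s *\<^sub>R ((1 / \<gamma> n) *\<^sub>R (a - T n a) - (1 / \<gamma> m) *\<^sub>R (b - T m b))"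
    unfolding \<alpha>_def \<beta>_def by (simp add: algebra_simps divide_inverse)
  finally show "norm (T n a - T m b) \<le> norm ((T n a - T m b) + s *\<^sub>R ((1 / \<gamma> n) *\<^sub>R (a - T n a) - (1 / \<gamma> m) *\<^sub>R (b - T m b)))" .
qed

theorem theorem3p15:
  fixes T :: "nat \<Rightarrow> 'a::{real_inner, complete_space} \<Rightarrow> 'a"
    and \<gamma> :: "nat \<Rightarrow> real"
    and x :: 'a
  assumes "\<And>n. \<gamma> n > 0"
    and "\<not> summable (\<lambda>n. (\<gamma> n)\<^sup>2)"
    and "jointly_firmly_nonexpansive T \<gamma>"
    and "(\<Inter>n. Fix (T n)) \<noteq> {}"
  shows "\<exists>p \<in> (\<Inter>n. Fix (T n)).
           weakly_convergent_to (\<lambda>n. rec_nat x (\<lambda>k xk. T k xk) n) p"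
proof -
  note g = assms(1) and ns = assms(2) and J = assms(3)
  define F where "F = (\<Inter>n. Fix (T n))"
  have Fiff: "q \<in> F \<longleftrightarrow> (\<forall>n. T n q = q)" for q unfolding F_def Fix_def by auto
  obtain p0 where p0: "p0 \<in> F" using assms(4) unfolding F_def by blast
  define xs where "xs = (\<lambda>n. rec_nat x (\<lambda>k xk. T k xk) n)"
  have xs0: "xs 0 = x" unfolding xs_def by simp
  have xsS: "xs (Suc n) = T n (xs n)" for n unfolding xs_def by simp
  define v where "v n = (1 / \<gamma> n) *\<^sub>R (xs n - xs (Suc n))" for n
  have gn: "\<gamma> n \<noteq> 0" for n using g[of n] by simp
  have fe: "norm (xs (Suc n) - q) ^ 2 + norm (xs n - xs (Suc n)) ^ 2 \<le> norm (xs n - q) ^ 2"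
    if qF: "q \<in> F" for q n
  proof -
    have Tq: "T n q = q" using qF Fiff by blast
    have "inner (T n (xs n) - T n q) ((1 / \<gamma> n) *\<^sub>R (xs n - T n (xs n)) - (1 / \<gamma> n) *\<^sub>R (q - T n q)) \<ge> 0"
      by (rule JI[OF g J])
    hence "(1 / \<gamma> n) * inner (xs (Suc n) - q) (xs n - xs (Suc n)) \<ge> 0"
      using Tq by (simp add: xsS)
    hence i0: "inner (xs (Suc n) - q) (xs n - xs (Suc n)) \<ge> 0"
      using g[of n] by (simp add: zero_le_divide_iff)
    have "xs n - q = (xs (Suc n) - q) + (xs n - xs (Suc n))" by simp
    hence "norm (xs n - q) ^ 2 = norm (xs (Suc n) - q) ^ 2 + 2 * inner (xs (Suc n) - q) (xs n - xs (Suc n)) + norm (xs n - xs (Suc n)) ^ 2"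
      by (metis power2_norm_eq_inner inner_add_left inner_add_right inner_commute mult_2 add.assoc)
    thus ?thesis using i0 by simp
  qed
  have fej: "norm (xs (Suc n) - q) \<le> norm (xs n - q)" if qF: "q \<in> F" for q n
  proof -
    have "norm (xs (Suc n) - q) ^ 2 \<le> norm (xs n - q) ^ 2"
      using fe[OF qF, of n] zero_le_power2[of "norm (xs n - xs (Suc n))"] by linarith
    thus ?thesis using power2_le_imp_le norm_ge_zero by blast
  qed
  have bp: "norm (xs n - p0) \<le> norm (x - p0)" for n
    by (induction n) (auto simp: xs0 intro: order_trans[OF fej[OF p0]])
  define B where "B = norm (x - p0) + norm p0"
  have bnd: "norm (xs n) \<le> B" for n
  proof -
    have "norm (xs n) \<le> norm (xs n - p0) + norm p0" by (metis diff_add_cancel norm_triangle_ineq)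
    thus ?thesis using bp[of n] unfolding B_def by simp
  qed
  have tel: "(\<Sum>i<n. norm (xs i - xs (Suc i)) ^ 2) \<le> norm (x - p0) ^ 2 - norm (xs n - p0) ^ 2" for n
  proof (induction n)
    case 0 show ?case by (simp add: xs0)
  next
    case (Suc n) thus ?case using fe[OF p0, of n] by simp
  qed
  have sumu: "summable (\<lambda>n. norm (xs n - xs (Suc n)) ^ 2)"
  proof (rule summableI_nonneg_bounded)
    show "(\<Sum>i<n. norm (xs i - xs (Suc i)) ^ 2) \<le> norm (x - p0) ^ 2" for n
      using tel[of n] by (smt (verit) zero_le_power2)
  qed simp
  have vdec: "norm (v (Suc n)) \<le> norm (v n)" for n
  proof -
    have "inner (T (Suc n) (xs (Suc n)) - T n (xs n))
       ((1 / \<gamma> (Suc n)) *\<^sub>R (xs (Suc n) - T (Suc n) (xs (Suc n))) - (1 / \<gamma> n) *\<^sub>R (xs n - T n (xs n))) \<ge> 0"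
      by (rule JI[OF g J])
    hence "inner (xs (Suc (Suc n)) - xs (Suc n)) (v (Suc n) - v n) \<ge> 0"
      unfolding v_def by (simp add: xsS)
    moreover have "xs (Suc (Suc n)) - xs (Suc n) = (- \<gamma> (Suc n)) *\<^sub>R v (Suc n)"
      unfolding v_def using gn[of "Suc n"] by simp
    ultimately have "(- \<gamma> (Suc n)) * inner (v (Suc n)) (v (Suc n) - v n) \<ge> 0" by simp
    hence "inner (v (Suc n)) (v (Suc n) - v n) \<le> 0"
      using g[of "Suc n"] by (simp add: mult_le_0_iff zero_le_mult_iff)
    hence "norm (v (Suc n)) ^ 2 \<le> inner (v (Suc n)) (v n)"
      by (simp add: inner_diff_right power2_norm_eq_inner)
    also have "\<dots> \<le> norm (v (Suc n)) * norm (v n)" by (rule Cauchy_Schwarz_ineq2[THEN order_trans[OF abs_ge_self]])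
    finally have "norm (v (Suc n)) * norm (v (Suc n)) \<le> norm (v (Suc n)) * norm (v n)"
      by (simp add: power2_eq_square)
    thus ?thesis by (cases "norm (v (Suc n)) = 0") (auto simp: mult_le_cancel_left)
  qed
  have decv: "decseq (\<lambda>n. norm (v n))" using vdec by (simp add: decseq_Suc_iff)
  have v0: "(\<lambda>n. norm (v n)) \<longlonglongrightarrow> 0"
  proof -
    obtain L where L: "(\<lambda>n. norm (v n)) \<longlonglongrightarrow> L" and Lle: "\<forall>i. L \<le> norm (v i)"
      using decseq_convergent[OF decv, of 0] by auto
    have L0: "L \<ge> 0" using L by (rule LIMSEQ_le_const) simp
    have "\<not> L > 0"
    proof
      assume Lp: "L > 0"
      have "(\<gamma> n)\<^sup>2 \<le> (1 / L ^ 2) * norm (xs n - xs (Suc n)) ^ 2" for n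
      proof -
        have "xs n - xs (Suc n) = \<gamma> n *\<^sub>R v n" unfolding v_def using gn[of n] by simp
        hence "norm (xs n - xs (Suc n)) = \<gamma> n * norm (v n)" using g[of n] by simp
        hence "\<gamma> n * L \<le> norm (xs n - xs (Suc n))" using Lle g[of n] by (simp add: mult_left_mono)
        hence "(\<gamma> n * L) ^ 2 \<le> norm (xs n - xs (Suc n)) ^ 2" using g[of n] Lp by (intro power_mono) auto
        thus ?thesis using Lp by (simp add: field_simps power_mult_distrib)
      qed
      hence cmp: "\<exists>N. \<forall>n\<ge>N. norm ((\<gamma> n)\<^sup>2) \<le> (1 / L ^ 2) * norm (xs n - xs (Suc n)) ^ 2" by simp
      have "summable (\<lambda>n. (\<gamma> n)\<^sup>2)"
        by (rule summable_comparison_test[OF cmp summable_mult[OF sumu]])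
      thus False using ns by blast
    qed
    hence "L = 0" using L0 by simp
    thus ?thesis using L by simp
  qed
  have clus: "z \<in> F" if \<phi>: "strict_mono \<phi>" and wz: "\<forall>y. (\<lambda>k. inner (xs (\<phi> k)) y) \<longlonglongrightarrow> inner z y" for \<phi> z
  proof -
    have "T m z = z" for m
    proof -
      define w where "w = T m z"
      define vv where "vv = (1 / \<gamma> m) *\<^sub>R (z - w)"
      define C where "C = norm (x - p0) + norm (p0 - w)"
      have C0: "C \<ge> 0" unfolding C_def by simp
      have ineq: "inner (xs (Suc n) - w) vv \<le> C * norm (v n)" for n
      proof -
        have "inner (T n (xs n) - T m z) ((1 / \<gamma> n) *\<^sub>R (xs n - T n (xs n)) - (1 / \<gamma> m) *\<^sub>R (z - T m z)) \<ge> 0"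
          by (rule JI[OF g J])
        hence "inner (xs (Suc n) - w) (v n - vv) \<ge> 0" unfolding v_def vv_def w_def by (simp add: xsS)
        hence "inner (xs (Suc n) - w) vv \<le> inner (xs (Suc n) - w) (v n)" by (simp add: inner_diff_right)
        also have "\<dots> \<le> norm (xs (Suc n) - w) * norm (v n)"
          by (rule Cauchy_Schwarz_ineq2[THEN order_trans[OF abs_ge_self]])
        also have "\<dots> \<le> C * norm (v n)"
        proof (rule mult_right_mono)
          have "norm (xs (Suc n) - w) \<le> norm (xs (Suc n) - p0) + norm (p0 - w)" by (rule norm_diff_triangle_le[of _ p0]) simp_all
          thus "norm (xs (Suc n) - w) \<le> C" using bp[of "Suc n"] unfolding C_def by simp
        qed simp
        finally show ?thesis .
      qed
      have le: "inner (xs (\<phi> (Suc k)) - w) vv \<le> C * norm (v k)" for k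
      proof -
        have "\<phi> (Suc k) \<ge> Suc k" using \<phi> by (rule seq_suble)
        then obtain j where j: "\<phi> (Suc k) = Suc j" and jk: "j \<ge> k" by (metis Suc_le_D Suc_le_mono)
        have "inner (xs (\<phi> (Suc k)) - w) vv \<le> C * norm (v j)" using ineq[of j] j by simp
        also have "\<dots> \<le> C * norm (v k)" using decseqD[OF decv jk] C0 by (rule mult_left_mono)
        finally show ?thesis .
      qed
      have l1: "(\<lambda>k. inner (xs (\<phi> (Suc k)) - w) vv) \<longlonglongrightarrow> inner (z - w) vv"
      proof -
        have "(\<lambda>k. inner (xs (\<phi> k)) vv - inner w vv) \<longlonglongrightarrow> inner z vv - inner w vv"
          using wz by (intro tendsto_diff tendsto_const) blast
        hence "(\<lambda>k. inner (xs (\<phi> k) - w) vv) \<longlonglongrightarrow> inner (z - w) vv" by (simp add: inner_diff_left)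
        thus ?thesis by (rule LIMSEQ_Suc[of "\<lambda>k. inner (xs (\<phi> k) - w) vv"])
      qed
      have l2: "(\<lambda>k. C * norm (v k)) \<longlonglongrightarrow> C * 0" by (intro tendsto_intros v0)
      have "inner (z - w) vv \<le> C * 0" using LIMSEQ_le[OF l1 l2] le by blast
      hence "(1 / \<gamma> m) * inner (z - w) (z - w) \<le> 0" unfolding vv_def by simp
      hence "inner (z - w) (z - w) \<le> 0" using g[of m] by (simp add: divide_le_0_iff)
      hence "inner (z - w) (z - w) = 0" using inner_ge_zero[of "z - w"] by linarith
      hence "z - w = 0" by simp
      thus ?thesis unfolding w_def by simp
    qed
    thus ?thesis using Fiff by blast
  qed
  have "\<exists>p\<in>F. \<forall>y. (\<lambda>n. inner (xs n) y) \<longlonglongrightarrow> inner p y"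
    apply (rule opial[of xs B F])
    using bnd fej clus by blast+
  then obtain p where pF: "p \<in> F" and wc: "\<forall>y. (\<lambda>n. inner (xs n) y) \<longlonglongrightarrow> inner p y"
    by blast
  show ?thesis using pF wc unfolding F_def xs_def weakly_convergent_to_def by blast
qed


end
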